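(* Let $S$ be a CLP-compact semitopological semigroup which contains a graph inverse semigroup $G(E)$ as a dense subsemigroup. Then for each subset $X\subset G(E)$ the closure $\overline{X}^S$ is countably compact at $X$.
   Context: All spaces are Hausdorff. A semitopological semigroup is a space with separately continuous associative multiplication. CLP-compact: every cover by clopen sets has a finite subcover. A space $W$ is countably compact at $A\subset W$ if every infinite $B\subset A$ has an accumulation point in $W$. A directed graph $E=(E^0,E^1,r,s)$ has vertices $E^0$, edges $E^1$, source/range maps $s,r:E^1\to E^0$; paths are vertices and sequences of edges $e_1\ldots e_n$ with $r(e_i)=s(e_{i+1})$. The graph inverse semigroup $G(E)$ is the semigroup with zero $0$ generated by $E^0$, $E^1$, $E^{-1}=\{e^{-1}\mid e\in E^1\}$ subject to: for $a,b\in E^0$, $e,f\in E^1$: $ab=a$ if $a=b$, else $0$; $s(e)e=er(e)=e$; $e^{-1}s(e)=r(e)e^{-1}=e^{-1}$; $e^{-1}f=r(e)$ if $e=f$, else $0$. *)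

theory Defs
  imports "HOL-Analysis.Analysis" "HOL-Library.Sublist"
begin

text \<open>Directed graph E = (E0, E1, r, s). A path is represented as a pair (v, es):
  v is its source vertex, es its list of edges (empty for the trivial path v).\<close>

definition is_path :: "'v set \<Rightarrow> 'e set \<Rightarrow> ('e \<Rightarrow> 'v) \<Rightarrow> ('e \<Rightarrow> 'v) \<Rightarrow> 'v \<times> 'e list \<Rightarrow> bool" where
  "is_path E0 E1 s r p \<longleftrightarrow>
     fst p \<in> E0 \<and> set (snd p) \<subseteq> E1 \<and>
     (snd p \<noteq> [] \<longrightarrow> s (hd (snd p)) = fst p) \<and>
     (\<forall>i. Suc i < length (snd p) \<longrightarrow> r (snd p ! i) = s (snd p ! Suc i))"

definition path_range :: "('e \<Rightarrow> 'v) \<Rightarrow> 'v \<times> 'e list \<Rightarrow> 'v" where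
  "path_range r p = (if snd p = [] then fst p else r (last (snd p)))"

text \<open>Elements of the graph inverse semigroup in normal form:
  None is the zero, Some (p, q) is p q^{-1} with r(p) = r(q).\<close>

type_synonym ('v, 'e) gis_elem = "(('v \<times> 'e list) \<times> ('v \<times> 'e list)) option"

definition graph_inverse_semigroup ::
  "'v set \<Rightarrow> 'e set \<Rightarrow> ('e \<Rightarrow> 'v) \<Rightarrow> ('e \<Rightarrow> 'v) \<Rightarrow> ('v, 'e) gis_elem set" where
  "graph_inverse_semigroup E0 E1 s r =
     {None} \<union> {Some (p, q) | p q. is_path E0 E1 s r p \<and> is_path E0 E1 s r q \<and>
                                   path_range r p = path_range r q}"

text \<open>Multiplication: (p q^{-1})(p' q'^{-1}) = p w q'^{-1} if p' = q w,
  = p (q' w)^{-1} if q = p' w, and 0 otherwise.\<close>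

definition gis_mult :: "('v, 'e) gis_elem \<Rightarrow> ('v, 'e) gis_elem \<Rightarrow> ('v, 'e) gis_elem" where
  "gis_mult x y = (case (x, y) of
     (Some (p, q), Some (p', q')) \<Rightarrow>
        if fst q = fst p' \<and> prefix (snd q) (snd p')
        then Some ((fst p, snd p @ drop (length (snd q)) (snd p')), q')
        else if fst q = fst p' \<and> prefix (snd p') (snd q)
        then Some (p, (fst q', snd q' @ drop (length (snd p')) (snd q)))
        else None
   | _ \<Rightarrow> None)"

definition semitopological_semigroup :: "('s::t2_space \<Rightarrow> 's \<Rightarrow> 's) \<Rightarrow> bool" where
  "semitopological_semigroup mul \<longleftrightarrow>
     (\<forall>x y z. mul (mul x y) z = mul x (mul y z)) \<and>
     (\<forall>a. continuous_on UNIV (mul a) \<and> continuous_on UNIV (\<lambda>x. mul x a))"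

definition clp_compact :: "'a::topological_space set \<Rightarrow> bool" where
  "clp_compact W \<longleftrightarrow>
     (\<forall>\<U>. (\<forall>U\<in>\<U>. openin (top_of_set W) U \<and> closedin (top_of_set W) U) \<and> W \<subseteq> \<Union>\<U> \<longrightarrow>
          (\<exists>\<F>\<subseteq>\<U>. finite \<F> \<and> W \<subseteq> \<Union>\<F>))"

definition countably_compact_at :: "'a::topological_space set \<Rightarrow> 'a set \<Rightarrow> bool" where
  "countably_compact_at W A \<longleftrightarrow>
     (\<forall>B\<subseteq>A. infinite B \<longrightarrow> (\<exists>x\<in>W. x islimpt B))"

end

theory Submission
  imports Defs
begin

lemma path_range_in:
  assumes graph: "\<forall>e\<in>E1. s e \<in> E0 \<and> r e \<in> E0" and p: "is_path E0 E1 s r p"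
  shows "path_range r p \<in> E0"
proof (cases "snd p = []")
  case True then show ?thesis using p by (simp add: path_range_def is_path_def)
next
  case False
  then have "last (snd p) \<in> E1" using p unfolding is_path_def by auto
  then show ?thesis using False graph by (simp add: path_range_def)
qed

lemma is_path_snoc:
  assumes p: "is_path E0 E1 s r (a, xs)" and g: "g \<in> E1" and sg: "s g = path_range r (a, xs)"
  shows "is_path E0 E1 s r (a, xs @ [g])"
  unfolding is_path_def
proof (intro conjI allI impI)
  show "fst (a, xs @ [g]) \<in> E0" using p by (simp add: is_path_def)
  show "set (snd (a, xs @ [g])) \<subseteq> E1" using p g by (simp add: is_path_def)
  show "s (hd (snd (a, xs @ [g]))) = fst (a, xs @ [g])"
    using p sg by (cases xs) (auto simp: is_path_def path_range_def)
  fix i assume i: "Suc i < length (snd (a, xs @ [g]))"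
  show "r (snd (a, xs @ [g]) ! i) = s (snd (a, xs @ [g]) ! Suc i)"
  proof (cases "Suc i < length xs")
    case True then show ?thesis using p by (simp add: is_path_def nth_append)
  next
    case False
    then have "Suc i = length xs" using i by simp
    then have "xs \<noteq> []" "i = length xs - 1" by auto
    then show ?thesis using sg \<open>Suc i = length xs\<close>
      by (simp add: nth_append path_range_def last_conv_nth)
  qed
qed

lemma is_path_next:
  assumes p: "is_path E0 E1 s r (a, xs @ y # ys)"
  shows "s y = path_range r (a, xs) \<and> y \<in> E1"
proof (cases "xs = []")
  case True then show ?thesis using p by (simp add: is_path_def path_range_def)
next
  case False
  have "y \<in> E1" using p by (simp add: is_path_def)
  moreover have "r ((xs @ y # ys) ! (length xs - 1)) = s ((xs @ y # ys) ! Suc (length xs - 1))"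
  proof -
    have "Suc (length xs - 1) < length (xs @ y # ys)" using False by simp
    then show ?thesis using p unfolding is_path_def by (metis snd_conv)
  qed
  ultimately show ?thesis using False
    by (simp add: nth_append path_range_def last_conv_nth)
qed

lemma G_Some:
  "Some (p, q) \<in> graph_inverse_semigroup E0 E1 s r \<longleftrightarrow>
     is_path E0 E1 s r p \<and> is_path E0 E1 s r q \<and> path_range r p = path_range r q"
  by (cases p; cases q) (auto simp: graph_inverse_semigroup_def)

lemma G_None: "None \<in> graph_inverse_semigroup E0 E1 s r"
  by (auto simp: graph_inverse_semigroup_def)

lemma prefix_drop_eq: "prefix xs ys \<Longrightarrow> xs @ drop (length xs) ys = ys"
  by (auto simp: prefix_def)

lemma prefix_drop_eq2: "prefix (xs @ [g]) ys \<Longrightarrow> xs @ g # drop (Suc (length xs)) ys = ys"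
  using prefix_drop_eq[of "xs @ [g]" ys] by simp

lemma left_cond:
  assumes "gis_mult (Some((w,[]),(u1,u2@[g]))) (Some((p1,p2),q)) \<noteq> None"
    and "gis_mult (Some((u1,u2@[g]),(u1,u2@[g]))) (Some((p1,p2),q)) \<noteq> Some((p1,p2),q)"
  shows "p1 = u1 \<and> prefix p2 u2"
  using assms by (auto simp: gis_mult_def prefix_drop_eq prefix_drop_eq2 split: if_splits)

lemma right_cond:
  assumes "gis_mult (Some(p,(q1,q2))) (Some((v1,v2@[g]),(w,[]))) \<noteq> None"
    and "gis_mult (Some(p,(q1,q2))) (Some((v1,v2@[g]),(v1,v2@[g]))) \<noteq> Some(p,(q1,q2))"
  shows "q1 = v1 \<and> prefix q2 v2"
  using assms by (auto simp: gis_mult_def prefix_drop_eq prefix_drop_eq2 split: if_splits)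

lemma left_cond0:
  assumes "gis_mult (Some((w,[]),(u1,u2))) (Some((p1,p2),q)) \<noteq> None"
  shows "p1 = u1 \<and> (prefix u2 p2 \<or> prefix p2 u2)"
  using assms by (auto simp: gis_mult_def split: if_splits)

lemma right_cond0:
  assumes "gis_mult (Some(p,(q1,q2))) (Some((v1,v2),(w,[]))) \<noteq> None"
  shows "q1 = v1 \<and> (prefix q2 v2 \<or> prefix v2 q2)"
  using assms by (auto simp: gis_mult_def split: if_splits)

lemma key:
  fixes mul :: "'s::t2_space \<Rightarrow> 's \<Rightarrow> 's" and h :: "('v, 'e) gis_elem \<Rightarrow> 's"
  assumes graph: "\<forall>e\<in>E1. s e \<in> E0 \<and> r e \<in> E0"
    and semitop: "semitopological_semigroup mul"
    and inj: "inj_on h (graph_inverse_semigroup E0 E1 s r)"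
    and hom: "\<forall>x\<in>graph_inverse_semigroup E0 E1 s r. \<forall>y\<in>graph_inverse_semigroup E0 E1 s r.
                 h (gis_mult x y) = mul (h x) (h y)"
    and a: "Some ((u1, u2), (v1, v2)) \<in> graph_inverse_semigroup E0 E1 s r"
  shows "\<exists>W. open W \<and> h (Some ((u1, u2), (v1, v2))) \<in> W \<and>
     (\<forall>x\<in>graph_inverse_semigroup E0 E1 s r. h x \<in> W \<longrightarrow>
        (\<exists>p2 q2. x = Some ((u1, p2), (v1, q2)) \<and> prefix p2 u2 \<and> prefix q2 v2))"
proof -
  let ?G = "graph_inverse_semigroup E0 E1 s r"
  let ?a = "Some ((u1, u2), (v1, v2))"
  have contL: "\<And>c. continuous_on UNIV (mul c)" and contR: "\<And>c. continuous_on UNIV (\<lambda>x. mul x c)"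
    using semitop by (auto simp: semitopological_semigroup_def)
  have hm: "\<And>x y. x \<in> ?G \<Longrightarrow> y \<in> ?G \<Longrightarrow> mul (h x) (h y) = h (gis_mult x y)"
    using hom by auto
  have injD: "\<And>x y. x \<in> ?G \<Longrightarrow> y \<in> ?G \<Longrightarrow> h x = h y \<Longrightarrow> x = y"
    using inj by (auto simp: inj_on_def)
  have pu: "is_path E0 E1 s r (u1, u2)" and pv: "is_path E0 E1 s r (v1, v2)"
    and rng: "path_range r (u1, u2) = path_range r (v1, v2)" using a by (auto simp: G_Some)
  define e where "e = path_range r (u1, u2)"
  have eE0: "e \<in> E0" unfolding e_def using path_range_in[OF graph pu] .
  have rv: "path_range r (v1, v2) = e" using rng e_def by simp
  have None_G: "None \<in> ?G" by (rule G_None)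
  have openL: "\<And>c d. open {y. mul c y \<noteq> d}"
    by (rule open_Collect_neq[OF contL continuous_on_const])
  have openR: "\<And>c d. open {y. mul y c \<noteq> d}"
    by (rule open_Collect_neq[OF contR continuous_on_const])
  have openL': "\<And>c. open {y. mul c y \<noteq> y}"
    by (rule open_Collect_neq[OF contL continuous_on_id])
  have openR': "\<And>c. open {y. mul y c \<noteq> y}"
    by (rule open_Collect_neq[OF contR continuous_on_id])
  show ?thesis
  proof (cases "\<exists>g\<in>E1. s g = e")
    case True
    then obtain g where g: "g \<in> E1" "s g = e" by blast
    have rgE: "r g \<in> E0" using graph g by auto
    have pug: "is_path E0 E1 s r (u1, u2 @ [g])" using is_path_snoc[OF pu g(1)] g e_def by simp
    have pvg: "is_path E0 E1 s r (v1, v2 @ [g])" using is_path_snoc[OF pv g(1)] g rv by simp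
    have p0: "is_path E0 E1 s r (r g, [])" using rgE by (simp add: is_path_def)
    have rr: "path_range r (u1, u2 @ [g]) = r g" "path_range r (v1, v2 @ [g]) = r g"
      "path_range r (r g, []) = r g" by (simp_all add: path_range_def)
    define U where "U = Some ((u1, u2 @ [g]), (u1, u2 @ [g]))"
    define Ugi where "Ugi = Some ((r g, [] :: 'e list), (u1, u2 @ [g]))"
    define V where "V = Some ((v1, v2 @ [g]), (v1, v2 @ [g]))"
    define Vg where "Vg = Some ((v1, v2 @ [g]), (r g, [] :: 'e list))"
    have mem: "U \<in> ?G" "Ugi \<in> ?G" "V \<in> ?G" "Vg \<in> ?G"
      "Some ((r g, []), (v1, v2 @ [g])) \<in> ?G" "Some ((u1, u2 @ [g]), (v1, v2 @ [g])) \<in> ?G"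
      "Some ((u1, u2 @ [g]), (r g, [])) \<in> ?G"
      unfolding U_def Ugi_def V_def Vg_def G_Some using pug pvg p0 rr by auto
    define W where "W = {y. mul (h Ugi) y \<noteq> h None} \<inter> {y. mul (h U) y \<noteq> y}
       \<inter> {y. mul y (h Vg) \<noteq> h None} \<inter> {y. mul y (h V) \<noteq> y}"
    have "open W" unfolding W_def using openL openL' openR openR' by (intro open_Int) auto
    moreover have "h ?a \<in> W"
    proof -
      have c1: "gis_mult Ugi ?a = Some ((r g, []), (v1, v2 @ [g]))"
        and c2: "gis_mult U ?a = Some ((u1, u2 @ [g]), (v1, v2 @ [g]))"
        and c3: "gis_mult ?a Vg = Some ((u1, u2 @ [g]), (r g, []))"
        and c4: "gis_mult ?a V = Some ((u1, u2 @ [g]), (v1, v2 @ [g]))"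
        unfolding U_def Ugi_def V_def Vg_def gis_mult_def by auto
      show ?thesis unfolding W_def
        using hm[OF mem(2) a] hm[OF mem(1) a] hm[OF a mem(4)] hm[OF a mem(3)] c1 c2 c3 c4
          injD[OF mem(5) None_G] injD[OF mem(6) a] injD[OF mem(7) None_G] by auto
    qed
    moreover have "\<forall>x\<in>?G. h x \<in> W \<longrightarrow>
        (\<exists>p2 q2. x = Some ((u1, p2), (v1, q2)) \<and> prefix p2 u2 \<and> prefix q2 v2)"
    proof (intro ballI impI)
      fix x assume xG: "x \<in> ?G" and xO: "h x \<in> W"
      have n1: "gis_mult Ugi x \<noteq> None" using xO hm[OF mem(2) xG] unfolding W_def by (intro notI) auto
      have n2: "gis_mult U x \<noteq> x" using xO hm[OF mem(1) xG] unfolding W_def by (intro notI) auto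
      have n3: "gis_mult x Vg \<noteq> None" using xO hm[OF xG mem(4)] unfolding W_def by (intro notI) auto
      have n4: "gis_mult x V \<noteq> x" using xO hm[OF xG mem(3)] unfolding W_def by (intro notI) auto
      obtain p1 p2 q1 q2 where x: "x = Some ((p1, p2), (q1, q2))"
        using n1 by (cases x) (auto simp: gis_mult_def Ugi_def)
      have "p1 = u1 \<and> prefix p2 u2"
        by (rule left_cond) (use n1 n2 in \<open>auto simp: x U_def Ugi_def\<close>)
      moreover have "q1 = v1 \<and> prefix q2 v2"
        by (rule right_cond) (use n3 n4 in \<open>auto simp: x V_def Vg_def\<close>)
      ultimately show "\<exists>p2 q2. x = Some ((u1, p2), (v1, q2)) \<and> prefix p2 u2 \<and> prefix q2 v2"
        using x by auto
    qed
    ultimately show ?thesis by blast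
  next
    case False
    have p0: "is_path E0 E1 s r (e, [])" using eE0 by (simp add: is_path_def)
    have r0: "path_range r (e, []) = e" by (simp add: path_range_def)
    define ui where "ui = Some ((e, [] :: 'e list), (u1, u2))"
    define vv where "vv = Some ((v1, v2), (e, [] :: 'e list))"
    have mem: "ui \<in> ?G" "vv \<in> ?G" "Some ((e, []), (v1, v2)) \<in> ?G" "Some ((u1, u2), (e, [])) \<in> ?G"
      unfolding ui_def vv_def G_Some using pu pv p0 r0 rv e_def by auto
    define W where "W = {y. mul (h ui) y \<noteq> h None} \<inter> {y. mul y (h vv) \<noteq> h None}"
    have "open W" unfolding W_def using openL openR by (intro open_Int) auto
    moreover have "h ?a \<in> W"
    proof -
      have c1: "gis_mult ui ?a = Some ((e, []), (v1, v2))"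
        and c3: "gis_mult ?a vv = Some ((u1, u2), (e, []))"
        unfolding ui_def vv_def gis_mult_def by auto
      show ?thesis unfolding W_def
        using hm[OF mem(1) a] hm[OF a mem(2)] c1 c3
          injD[OF mem(3) None_G] injD[OF mem(4) None_G] by auto
    qed
    moreover have "\<forall>x\<in>?G. h x \<in> W \<longrightarrow>
        (\<exists>p2 q2. x = Some ((u1, p2), (v1, q2)) \<and> prefix p2 u2 \<and> prefix q2 v2)"
    proof (intro ballI impI)
      fix x assume xG: "x \<in> ?G" and xO: "h x \<in> W"
      have n1: "gis_mult ui x \<noteq> None" using xO hm[OF mem(1) xG] unfolding W_def by (intro notI) auto
      have n3: "gis_mult x vv \<noteq> None" using xO hm[OF xG mem(2)] unfolding W_def by (intro notI) auto
      obtain p1 p2 q1 q2 where x: "x = Some ((p1, p2), (q1, q2))"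
        using n1 by (cases x) (auto simp: gis_mult_def ui_def)
      have pp: "is_path E0 E1 s r (p1, p2)" and pq: "is_path E0 E1 s r (q1, q2)"
        using xG x by (auto simp: G_Some)
      have l: "p1 = u1 \<and> (prefix u2 p2 \<or> prefix p2 u2)"
        by (rule left_cond0) (use n1 in \<open>auto simp: x ui_def\<close>)
      have l2: "prefix p2 u2"
      proof (rule ccontr)
        assume np: "\<not> prefix p2 u2"
        then have "prefix u2 p2" using l by auto
        then obtain w where w: "p2 = u2 @ w" by (auto simp: prefix_def)
        with np obtain y ys where "w = y # ys" by (cases w) auto
        then have "s y = path_range r (p1, u2) \<and> y \<in> E1" using is_path_next[of E0 E1 s r p1 u2 y ys] pp w by simp
        then show False using False l e_def by auto
      qed
      have rr: "q1 = v1 \<and> (prefix q2 v2 \<or> prefix v2 q2)"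
        by (rule right_cond0) (use n3 in \<open>auto simp: x vv_def\<close>)
      have r2: "prefix q2 v2"
      proof (rule ccontr)
        assume np: "\<not> prefix q2 v2"
        then have "prefix v2 q2" using rr by auto
        then obtain w where w: "q2 = v2 @ w" by (auto simp: prefix_def)
        with np obtain y ys where "w = y # ys" by (cases w) auto
        then have "s y = path_range r (q1, v2) \<and> y \<in> E1" using is_path_next[of E0 E1 s r q1 v2 y ys] pq w by simp
        then show False using False rr rv by auto
      qed
      show "\<exists>p2 q2. x = Some ((u1, p2), (v1, q2)) \<and> prefix p2 u2 \<and> prefix q2 v2"
        using x l l2 rr r2 by auto
    qed
    ultimately show ?thesis by blast
  qed
qed

lemma isolated:
  fixes mul :: "'s::t2_space \<Rightarrow> 's \<Rightarrow> 's" and h :: "('v, 'e) gis_elem \<Rightarrow> 's"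
  assumes graph: "\<forall>e\<in>E1. s e \<in> E0 \<and> r e \<in> E0"
    and semitop: "semitopological_semigroup mul"
    and inj: "inj_on h (graph_inverse_semigroup E0 E1 s r)"
    and hom: "\<forall>x\<in>graph_inverse_semigroup E0 E1 s r. \<forall>y\<in>graph_inverse_semigroup E0 E1 s r.
                 h (gis_mult x y) = mul (h x) (h y)"
    and dense: "closure (h ` graph_inverse_semigroup E0 E1 s r) = UNIV"
    and aG: "a \<in> graph_inverse_semigroup E0 E1 s r" and an: "a \<noteq> None"
  shows "open {h a}"
proof -
  let ?G = "graph_inverse_semigroup E0 E1 s r"
  obtain u1 u2 v1 v2 where a: "a = Some ((u1, u2), (v1, v2))" using an by (cases a) auto
  obtain W where W: "open W" "h a \<in> W"
    and WG: "\<forall>x\<in>?G. h x \<in> W \<longrightarrow>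
        (\<exists>p2 q2. x = Some ((u1, p2), (v1, q2)) \<and> prefix p2 u2 \<and> prefix q2 v2)"
    using key[OF graph semitop inj hom aG[unfolded a]] a by blast
  define P where "P = {x \<in> ?G. h x \<in> W}"
  have "P \<subseteq> (\<lambda>(p2, q2). Some ((u1, p2), (v1, q2))) ` (set (prefixes u2) \<times> set (prefixes v2))"
    using WG unfolding P_def by fastforce
  then have finP: "finite P" by (rule finite_subset) auto
  define W' where "W' = W - (h ` P - {h a})"
  have oW': "open W'" unfolding W'_def using W(1) finP
    by (intro open_Diff finite_imp_closed) auto
  have aW': "h a \<in> W'" unfolding W'_def using W(2) by auto
  have sub: "W' \<inter> h ` ?G \<subseteq> {h a}" unfolding W'_def P_def by auto
  have "W' \<subseteq> closure (W' \<inter> h ` ?G)"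
    using open_Int_closure_subset[OF oW', of "h ` ?G"] dense by simp
  also have "\<dots> \<subseteq> closure {h a}" using sub by (rule closure_mono)
  finally have "W' = {h a}" using aW' by auto
  then show ?thesis using oW' by simp
qed

theorem corollary2p3:
  fixes E0 :: "'v set" and E1 :: "'e set" and s r :: "'e \<Rightarrow> 'v"
    and mul :: "'s::t2_space \<Rightarrow> 's \<Rightarrow> 's"
    and h :: "('v, 'e) gis_elem \<Rightarrow> 's"
    and X :: "('v, 'e) gis_elem set"
  assumes graph: "\<forall>e\<in>E1. s e \<in> E0 \<and> r e \<in> E0"
    and semitop: "semitopological_semigroup mul"
    and clp: "clp_compact (UNIV :: 's set)"
    and inj: "inj_on h (graph_inverse_semigroup E0 E1 s r)"
    and hom: "\<forall>x\<in>graph_inverse_semigroup E0 E1 s r. \<forall>y\<in>graph_inverse_semigroup E0 E1 s r.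
                 h (gis_mult x y) = mul (h x) (h y)"
    and dense: "closure (h ` graph_inverse_semigroup E0 E1 s r) = UNIV"
    and X: "X \<subseteq> graph_inverse_semigroup E0 E1 s r"
  shows "countably_compact_at (closure (h ` X)) (h ` X)"
  unfolding countably_compact_at_def
proof (intro allI impI)
  fix B assume BX: "B \<subseteq> h ` X" and infB: "infinite B"
  show "\<exists>x\<in>closure (h ` X). x islimpt B"
  proof (rule ccontr)
    assume nl: "\<not> (\<exists>x\<in>closure (h ` X). x islimpt B)"
    have nol: "\<And>x. \<not> x islimpt B"
    proof
      fix x assume "x islimpt B"
      then have "x \<in> closure B" by (simp add: closure_def)
      also have "closure B \<subseteq> closure (h ` X)" using BX by (rule closure_mono)
      finally show False using nl \<open>x islimpt B\<close> by blast
    qed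
    then have clB: "closed B" by (simp add: closed_limpt)
    define B' where "B' = B - {h None}"
    have clB': "closed B'"
    proof -
      have "\<And>x. \<not> x islimpt B'" unfolding B'_def using nol islimpt_subset by (metis Diff_subset)
      then show ?thesis by (simp add: closed_limpt)
    qed
    have opsing: "\<And>b. b \<in> B' \<Longrightarrow> open {b}"
    proof -
      fix b assume "b \<in> B'"
      then obtain x where x: "x \<in> X" "b = h x" "b \<noteq> h None" using BX unfolding B'_def by auto
      then have xn: "x \<noteq> None" using x(2,3) by metis
      have "x \<in> graph_inverse_semigroup E0 E1 s r" using X x(1) by auto
      then show "open {b}" using isolated[OF graph semitop inj hom dense _ xn] x(2) by simp
    qed
    have opB': "open B'"
    proof -
      have "B' = (\<Union>b\<in>B'. {b})" by auto
      then show ?thesis using opsing by (metis open_UN)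
    qed
    define \<U> where "\<U> = insert (- B') ((\<lambda>b. {b}) ` B')"
    have "\<forall>U\<in>\<U>. openin (top_of_set UNIV) U \<and> closedin (top_of_set UNIV) U"
      unfolding \<U>_def using opB' clB' opsing by (simp add: open_Compl closed_Compl opsing)
    moreover have "UNIV \<subseteq> \<Union>\<U>" unfolding \<U>_def by auto
    ultimately obtain \<F> where F: "\<F> \<subseteq> \<U>" "finite \<F>" "UNIV \<subseteq> \<Union>\<F>"
      using clp[unfolded clp_compact_def, rule_format, of \<U>] by blast
    have "(\<lambda>b. {b}) ` B' \<subseteq> \<F>"
    proof
      fix S assume "S \<in> (\<lambda>b. {b}) ` B'"
      then obtain b where b: "b \<in> B'" "S = {b}" by auto
      then obtain T where T: "T \<in> \<F>" "b \<in> T" using F(3) by blast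
      then have "T \<in> \<U>" using F(1) by auto
      then have "T = {b}" using T(2) b(1) unfolding \<U>_def by auto
      then show "S \<in> \<F>" using T b by simp
    qed
    then have "finite ((\<lambda>b. {b}) ` B')" using F(2) by (rule finite_subset)
    then have "finite B'" by (rule finite_imageD) (auto simp: inj_on_def)
    then have "finite B" unfolding B'_def by simp
    then show False using infB by simp
  qed
qed

end
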